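(* Fix $\lambda,\mu,q>0$, $k\ge1$, $b\ge0$ and $\alpha\in(\underline\alpha,1]$, and let $J(\alpha,a,b)$, $\gamma$, $\theta$, $m_\alpha$ be as in the context. Then for $a\in(0,\infty)$, $\frac{\partial}{\partial a}J(\alpha,a,b)=\lambda\frac{\mu}{\alpha}e^{-\frac{\mu}{\alpha}a}\,\frac{-ak\big(q+q\frac{\mu}{\alpha}\theta(b,\alpha)\big)+c(\alpha)\gamma(b,\alpha)+\lambda k\frac{e^{-\frac{\mu}{\alpha}a}-1}{\mu/\alpha}}{\big(q+\frac{\mu q}{\alpha}\theta(b,\alpha)+\lambda e^{-\frac{\mu}{\alpha}a}\big)^2}.$ Consequently: (1) $\lim_{a\to0+}\frac{\partial}{\partial a}J(\alpha,a,b)>0$ and $\frac{\partial}{\partial a}J(\alpha,a,b)<0$ for all sufficiently large $a$, so neither $a=0$ nor $a=\infty$ maximises $a\mapsto J(\alpha,a,b)$; (2) there exists a unique $a_{k,b,\alpha}\in(0,\infty)$ with $\frac{\partial}{\partial a}J(\alpha,a_{k,b,\alpha},b)=0$, equivalently $-a_{k,b,\alpha}k\big(q+q\frac{\mu}{\alpha}\theta(b,\alpha)\big)+c(\alpha)\gamma(b,\alpha)+\lambda k\frac{e^{-\frac{\mu}{\alpha}a_{k,b,\alpha}}-1}{\mu/\alpha}=0,$ and at this point $J(\alpha,a_{k,b,\alpha},b)=k\,a_{k,b,\alpha}$.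
   Context: Let $c(\alpha)=c-(1-\alpha)(1+\eta_2)\lambda\mu$ with $c>0$, $\eta_2>0$, where $\underline\alpha$ is the zero of $c(\cdot)$, so that $c(\alpha)>0$ for $\alpha>\underline\alpha$. For retention $\alpha$, let $\rho_-(\alpha)\le0\le\Phi_q(\alpha)$ be the roots of $\alpha c(\alpha)\theta^2+(c(\alpha)\mu-\alpha\lambda-\alpha q)\theta-\mu q=0$. Define $\gamma(x,\alpha)=\frac{\Phi_q(\alpha)-\rho_-(\alpha)}{\Phi_q(\alpha)e^{\Phi_q(\alpha)x}-\rho_-(\alpha)e^{\rho_-(\alpha)x}}$, $\theta(x,\alpha)=\frac{e^{\Phi_q(\alpha)x}-e^{\rho_-(\alpha)x}}{\Phi_q(\alpha)e^{\Phi_q(\alpha)x}-\rho_-(\alpha)e^{\rho_-(\alpha)x}}$, $m_\alpha(a)=\frac{1-e^{-\frac{\mu}{\alpha}a}(\frac{\mu}{\alpha}a+1)}{\mu/\alpha}$, and $J(\alpha,a,b)=\frac{c(\alpha)\gamma(b,\alpha)-\lambda k\,m_\alpha(a)}{q+\frac{\mu q}{\alpha}\theta(b,\alpha)+\lambda e^{-\frac{\mu}{\alpha}a}}$ (the value at initial reserve $0$ of the policy with retention $\alpha$, injections up to severity $a$ and dividend barrier $b$, for exponential claims with rate $\mu$). *)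

theory Defs
  imports "HOL-Analysis.Analysis"
begin

text \<open>Parameters: c, eta2 (safety loading), lam (claim intensity), mu (exponential
claim rate), q (discount rate), k (injection cost factor).\<close>

definition c_ret :: "real \<Rightarrow> real \<Rightarrow> real \<Rightarrow> real \<Rightarrow> real \<Rightarrow> real" where
  "c_ret c eta2 lam mu \<alpha> = c - (1 - \<alpha>) * (1 + eta2) * lam * mu"

text \<open>The zero of the affine function c(.) (lower bound for admissible retention).\<close>
definition alpha_low :: "real \<Rightarrow> real \<Rightarrow> real \<Rightarrow> real \<Rightarrow> real" where
  "alpha_low c eta2 lam mu = 1 - c / ((1 + eta2) * lam * mu)"

definition quadA :: "real \<Rightarrow> real \<Rightarrow> real \<Rightarrow> real \<Rightarrow> real \<Rightarrow> real" where
  "quadA c eta2 lam mu \<alpha> = \<alpha> * c_ret c eta2 lam mu \<alpha>"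

definition quadB :: "real \<Rightarrow> real \<Rightarrow> real \<Rightarrow> real \<Rightarrow> real \<Rightarrow> real \<Rightarrow> real" where
  "quadB c eta2 lam mu q \<alpha> = c_ret c eta2 lam mu \<alpha> * mu - \<alpha> * lam - \<alpha> * q"

definition quadC :: "real \<Rightarrow> real \<Rightarrow> real" where
  "quadC mu q = - mu * q"

text \<open>The nonnegative root Phi_q(alpha) and the nonpositive root rho_-(alpha)
  (roots are real and of opposite sign since A > 0 > C).\<close>
definition Phi_q :: "real \<Rightarrow> real \<Rightarrow> real \<Rightarrow> real \<Rightarrow> real \<Rightarrow> real \<Rightarrow> real" where
  "Phi_q c eta2 lam mu q \<alpha> =
     (- quadB c eta2 lam mu q \<alpha> + sqrt ((quadB c eta2 lam mu q \<alpha>)\<^sup>2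
        - 4 * quadA c eta2 lam mu \<alpha> * quadC mu q)) / (2 * quadA c eta2 lam mu \<alpha>)"

definition rho_m :: "real \<Rightarrow> real \<Rightarrow> real \<Rightarrow> real \<Rightarrow> real \<Rightarrow> real \<Rightarrow> real" where
  "rho_m c eta2 lam mu q \<alpha> =
     (- quadB c eta2 lam mu q \<alpha> - sqrt ((quadB c eta2 lam mu q \<alpha>)\<^sup>2
        - 4 * quadA c eta2 lam mu \<alpha> * quadC mu q)) / (2 * quadA c eta2 lam mu \<alpha>)"

definition gam :: "real \<Rightarrow> real \<Rightarrow> real \<Rightarrow> real \<Rightarrow> real \<Rightarrow> real \<Rightarrow> real \<Rightarrow> real" where
  "gam c eta2 lam mu q x \<alpha> =
     (let P = Phi_q c eta2 lam mu q \<alpha>; R = rho_m c eta2 lam mu q \<alpha>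
      in (P - R) / (P * exp (P * x) - R * exp (R * x)))"

definition thet :: "real \<Rightarrow> real \<Rightarrow> real \<Rightarrow> real \<Rightarrow> real \<Rightarrow> real \<Rightarrow> real \<Rightarrow> real" where
  "thet c eta2 lam mu q x \<alpha> =
     (let P = Phi_q c eta2 lam mu q \<alpha>; R = rho_m c eta2 lam mu q \<alpha>
      in (exp (P * x) - exp (R * x)) / (P * exp (P * x) - R * exp (R * x)))"

definition m_ret :: "real \<Rightarrow> real \<Rightarrow> real \<Rightarrow> real" where
  "m_ret mu \<alpha> a = (1 - exp (- (mu / \<alpha>) * a) * ((mu / \<alpha>) * a + 1)) / (mu / \<alpha>)"

definition J :: "real \<Rightarrow> real \<Rightarrow> real \<Rightarrow> real \<Rightarrow> real \<Rightarrow> real \<Rightarrow> real \<Rightarrow> real \<Rightarrow> real \<Rightarrow> real" where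
  "J c eta2 lam mu q k \<alpha> a b =
     (c_ret c eta2 lam mu \<alpha> * gam c eta2 lam mu q b \<alpha> - lam * k * m_ret mu \<alpha> a) /
     (q + (mu * q / \<alpha>) * thet c eta2 lam mu q b \<alpha> + lam * exp (- (mu / \<alpha>) * a))"

definition Jnum :: "real \<Rightarrow> real \<Rightarrow> real \<Rightarrow> real \<Rightarrow> real \<Rightarrow> real \<Rightarrow> real \<Rightarrow> real \<Rightarrow> real \<Rightarrow> real" where
  "Jnum c eta2 lam mu q k \<alpha> a b =
     - a * k * (q + q * (mu / \<alpha>) * thet c eta2 lam mu q b \<alpha>)
     + c_ret c eta2 lam mu \<alpha> * gam c eta2 lam mu q b \<alpha>
     + lam * k * (exp (- (mu / \<alpha>) * a) - 1) / (mu / \<alpha>)"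

definition dJ :: "real \<Rightarrow> real \<Rightarrow> real \<Rightarrow> real \<Rightarrow> real \<Rightarrow> real \<Rightarrow> real \<Rightarrow> real \<Rightarrow> real \<Rightarrow> real" where
  "dJ c eta2 lam mu q k \<alpha> a b =
     lam * (mu / \<alpha>) * exp (- (mu / \<alpha>) * a) * Jnum c eta2 lam mu q k \<alpha> a b /
     (q + (mu * q / \<alpha>) * thet c eta2 lam mu q b \<alpha> + lam * exp (- (mu / \<alpha>) * a))\<^sup>2"

end

theory Submission
  imports Defs
begin

lemma generic:
  fixes lam mu q k \<alpha> cr g th :: real and Jf dJf Nf :: "real \<Rightarrow> real"
  assumes lam: "lam > 0" and mu: "mu > 0" and q: "q > 0" and k: "k \<ge> 1" and al: "\<alpha> > 0"
    and cr: "cr > 0" and g: "g > 0" and th: "th \<ge> 0"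
    and Jf: "\<And>a. Jf a = (cr * g - lam * k * ((1 - exp (- (mu / \<alpha>) * a) * ((mu / \<alpha>) * a + 1)) / (mu / \<alpha>))) /
     (q + (mu * q / \<alpha>) * th + lam * exp (- (mu / \<alpha>) * a))"
    and Nf: "\<And>a. Nf a = - a * k * (q + q * (mu / \<alpha>) * th) + cr * g + lam * k * (exp (- (mu / \<alpha>) * a) - 1) / (mu / \<alpha>)"
    and dJf: "\<And>a. dJf a = lam * (mu / \<alpha>) * exp (- (mu / \<alpha>) * a) * Nf a /
     (q + (mu * q / \<alpha>) * th + lam * exp (- (mu / \<alpha>) * a))\<^sup>2"
  shows
    "(\<forall>a>0. (Jf has_real_derivative dJf a) (at a))
     \<and> (\<exists>L>0. (dJf \<longlongrightarrow> L) (at_right 0))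
     \<and> (\<forall>\<^sub>F a in at_top. dJf a < 0)
     \<and> (\<exists>a>0. Jf a > Jf 0)
     \<and> (\<forall>L. (Jf \<longlongrightarrow> L) at_top \<longrightarrow> (\<exists>a>0. Jf a > L))
     \<and> (\<exists>!a. a > 0 \<and> dJf a = 0)
     \<and> (\<forall>a>0. dJf a = 0 \<longleftrightarrow> Nf a = 0)
     \<and> (\<forall>a>0. dJf a = 0 \<longrightarrow> Jf a = k * a)"
proof -
  define \<beta> where "\<beta> = mu / \<alpha>"
  define Q where "Q = q + q * \<beta> * th"
  have bp: "\<beta> > 0" using mu al by (simp add: \<beta>_def)
  have Qp: "Q > 0" using q bp th by (simp add: Q_def add_pos_nonneg)
  have kp: "k > 0" using k by simp
  have mq: "mu * q / \<alpha> * th = q * \<beta> * th" by (simp add: \<beta>_def)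
  define D where "D a = Q + lam * exp (- \<beta> * a)" for a
  have Dp: "D a > 0" for a using Qp lam by (simp add: D_def add_pos_pos)
  have Jf': "Jf a = (cr * g - lam * k * ((1 - exp (- \<beta> * a) * (\<beta> * a + 1)) / \<beta>)) / D a" for a
    using Jf[of a] mq by (simp add: D_def Q_def \<beta>_def add.assoc)
  have Nf': "Nf a = - a * k * Q + cr * g + lam * k * (exp (- \<beta> * a) - 1) / \<beta>" for a
    using Nf[of a] by (simp add: Q_def \<beta>_def)
  define F where "F a = lam * \<beta> * exp (- \<beta> * a) / (D a)\<^sup>2" for a
  have Fp: "F a > 0" for a using lam bp Dp[of a] by (simp add: F_def)
  have dJf': "dJf a = F a * Nf a" for a
    unfolding dJf[of a] mq \<beta>_def[symmetric] F_def D_def Q_def by simp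
  have dN: "(Nf has_real_derivative (- k * Q - lam * k * exp (- \<beta> * a))) (at a)" for a
  proof -
    have "((\<lambda>a. - a * k * Q + cr * g + lam * k * (exp (- \<beta> * a) - 1) / \<beta>) has_real_derivative (- k * Q - lam * k * exp (- \<beta> * a))) (at a)"
      using bp by (auto intro!: derivative_eq_intros simp: field_simps)
    moreover have "Nf = (\<lambda>a. - a * k * Q + cr * g + lam * k * (exp (- \<beta> * a) - 1) / \<beta>)"
      using Nf' by auto
    ultimately show ?thesis by simp
  qed
  have dJ: "(Jf has_real_derivative dJf a) (at a)" for a
  proof -
    have "((\<lambda>a. (cr * g - lam * k * ((1 - exp (- \<beta> * a) * (\<beta> * a + 1)) / \<beta>)) / (Q + lam * exp (- \<beta> * a))) has_real_derivative dJf a) (at a)"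
    proof -
      have e: "exp (- \<beta> * a) > 0" by simp
      have "((\<lambda>a. (cr * g - lam * k * ((1 - exp (- \<beta> * a) * (\<beta> * a + 1)) / \<beta>)) / (Q + lam * exp (- \<beta> * a))) has_real_derivative
        ((- (lam * k * ((- (exp (- \<beta> * a) * (- \<beta>)) * (\<beta> * a + 1) - exp (- \<beta> * a) * \<beta>) / \<beta>))) * (Q + lam * exp (- \<beta> * a))
          - (cr * g - lam * k * ((1 - exp (- \<beta> * a) * (\<beta> * a + 1)) / \<beta>)) * (lam * (exp (- \<beta> * a) * (- \<beta>))))
         / (Q + lam * exp (- \<beta> * a))^2) (at a)"
        using Dp[of a] bp unfolding D_def
        by (auto intro!: derivative_eq_intros simp: power2_eq_square)
      moreover have "((- (lam * k * ((- (exp (- \<beta> * a) * (- \<beta>)) * (\<beta> * a + 1) - exp (- \<beta> * a) * \<beta>) / \<beta>))) * (Q + lam * exp (- \<beta> * a))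
          - (cr * g - lam * k * ((1 - exp (- \<beta> * a) * (\<beta> * a + 1)) / \<beta>)) * (lam * (exp (- \<beta> * a) * (- \<beta>))))
         / (Q + lam * exp (- \<beta> * a))^2 = dJf a"
        unfolding dJf' F_def Nf' D_def using bp
        by (simp add: field_simps)
      ultimately show ?thesis by simp
    qed
    moreover have "Jf = (\<lambda>a. (cr * g - lam * k * ((1 - exp (- \<beta> * a) * (\<beta> * a + 1)) / \<beta>)) / (Q + lam * exp (- \<beta> * a)))"
      using Jf' by (auto simp: D_def)
    ultimately show ?thesis by simp
  qed

  have Ndec: "Nf y < Nf x" if "x < y" for x y
  proof (rule DERIV_neg_imp_decreasing[OF that])
    fix t
    have "- k * Q - lam * k * exp (- \<beta> * t) < 0"
    proof -
      have "lam * k * exp (- \<beta> * t) > 0" "k * Q > 0" using kp Qp lam by simp_all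
      then show ?thesis by linarith
    qed
    then show "\<exists>y. DERIV Nf t :> y \<and> y < 0" using dN by blast
  qed
  have contN: "continuous_on S Nf" for S
    using dN by (meson DERIV_isCont continuous_at_imp_continuous_on)
  have N0: "Nf 0 = cr * g" by (simp add: Nf')
  have N0p: "Nf 0 > 0" using N0 cr g by simp
  define a1 where "a1 = cr * g / (k * Q) + 1"
  have a1p: "a1 > 0" using cr g kp Qp by (simp add: a1_def add_pos_pos)
  have "Nf a1 < 0"
  proof -
    have "exp (- \<beta> * a1) \<le> 1" using bp a1p by simp
    then have "lam * k * (exp (- \<beta> * a1) - 1) / \<beta> \<le> 0"
      using lam kp bp by (intro divide_nonpos_pos mult_nonneg_nonpos) auto
    moreover have "a1 * k * Q = cr * g + k * Q" using kp Qp by (simp add: a1_def field_simps)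
    moreover have "k * Q > 0" using kp Qp by simp
    ultimately show ?thesis unfolding Nf' by linarith
  qed
  then obtain a0 where a0: "0 \<le> a0" "a0 \<le> a1" "Nf a0 = 0"
    using IVT2'[of Nf a1 0 0] N0p a1p contN by force
  have a0p: "a0 > 0" using a0 N0p by (cases "a0 = 0") auto
  have zero_iff: "Nf a = 0 \<longleftrightarrow> a = a0" for a
    using Ndec[of a a0] Ndec[of a0 a] a0(3) by (cases a a0 rule: linorder_cases) auto
  have dpos: "dJf a > 0" if "a < a0" for a
    using Ndec[OF that] a0(3) Fp[of a] by (simp add: dJf')
  have dneg: "dJf a < 0" if "a0 < a" for a
    using Ndec[OF that] a0(3) Fp[of a] by (simp add: dJf' mult_pos_neg)
  have dz: "dJf a = 0 \<longleftrightarrow> Nf a = 0" for a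
    using Fp[of a] by (simp add: dJf')
  have c1: "\<forall>a>0. (Jf has_real_derivative dJf a) (at a)" using dJ by blast
  have c2: "\<exists>L>0. (dJf \<longlongrightarrow> L) (at_right 0)"
  proof (intro exI conjI)
    have "isCont (\<lambda>a. lam * \<beta> * exp (- \<beta> * a) / (Q + lam * exp (- \<beta> * a))\<^sup>2 * Nf a) 0"
      using Dp[of 0] DERIV_isCont[OF dN[of 0]] unfolding D_def
      by (intro continuous_intros) auto
    moreover have "dJf = (\<lambda>a. lam * \<beta> * exp (- \<beta> * a) / (Q + lam * exp (- \<beta> * a))\<^sup>2 * Nf a)"
      by (rule ext) (simp add: dJf' F_def D_def)
    ultimately have "isCont dJf 0" by simp
    then show "(dJf \<longlongrightarrow> dJf 0) (at_right 0)"
      unfolding isCont_def by (rule tendsto_mono[OF at_within_le_at])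
    show "dJf 0 > 0" using dpos a0p by simp
  qed
  have c3: "\<forall>\<^sub>F a in at_top. dJf a < 0"
    using eventually_gt_at_top[of a0] by eventually_elim (rule dneg)
  have c4: "\<exists>a>0. Jf a > Jf 0"
  proof (intro exI conjI)
    show "a0 / 2 > 0" using a0p by simp
    show "Jf (a0 / 2) > Jf 0"
    proof (rule DERIV_pos_imp_increasing[where f=Jf])
      show "0 < a0 / 2" using a0p by simp
      fix x assume "0 \<le> x" "x \<le> a0 / 2"
      then have "x < a0" using a0p by simp
      then show "\<exists>y. DERIV Jf x :> y \<and> y > 0" using dJ[of x] dpos[of x] by blast
    qed
  qed
  have c5: "\<forall>L. (Jf \<longlongrightarrow> L) at_top \<longrightarrow> (\<exists>a>0. Jf a > L)"
  proof (intro allI impI)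
    fix L assume "(Jf \<longlongrightarrow> L) at_top"
    then have "L < Jf (a0 + 1)"
    proof (rule DERIV_neg_imp_decreasing_at_top[where f=Jf, rotated])
      fix x assume "x \<ge> a0 + 1"
      then have "a0 < x" by simp
      then show "\<exists>y. DERIV Jf x :> y \<and> y < 0" using dJ[of x] dneg[of x] by blast
    qed
    then show "\<exists>a>0. Jf a > L" using a0p by (intro exI[of _ "a0 + 1"]) auto
  qed
  have c6: "\<exists>!a. a > 0 \<and> dJf a = 0"
  proof (rule ex1I[of _ a0])
    show "a0 > 0 \<and> dJf a0 = 0" using a0p dz zero_iff by simp
    show "\<And>a. a > 0 \<and> dJf a = 0 \<Longrightarrow> a = a0" using dz zero_iff by simp
  qed
  have c8: "\<forall>a>0. dJf a = 0 \<longrightarrow> Jf a = k * a"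
  proof (intro allI impI)
    fix a :: real assume "a > 0" "dJf a = 0"
    then have "Nf a = 0" using dz by simp
    then have cg: "cr * g = a * k * Q - lam * k * (exp (- \<beta> * a) - 1) / \<beta>"
      using Nf'[of a] by linarith
    have "cr * g - lam * k * ((1 - exp (- \<beta> * a) * (\<beta> * a + 1)) / \<beta>) = k * a * D a"
      unfolding cg D_def using bp by (simp add: field_simps)
    then show "Jf a = k * a" using Dp[of a] by (simp add: Jf')
  qed
  have c7: "\<forall>a>0. dJf a = 0 \<longleftrightarrow> Nf a = 0" using dz by simp
  show ?thesis using c1 c2 c3 c4 c5 c6 c7 c8 by (intro conjI)
qed

theorem lemma4p3:
  fixes c eta2 lam mu q k b \<alpha> :: real
  assumes "c > 0" and "eta2 > 0" and "lam > 0" and "mu > 0" and "q > 0"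
    and "k \<ge> 1" and "b \<ge> 0"
    and "alpha_low c eta2 lam mu < \<alpha>" and "0 < \<alpha>" and "\<alpha> \<le> 1"
  shows
    "(\<forall>a>0. ((\<lambda>x. J c eta2 lam mu q k \<alpha> x b) has_real_derivative
               dJ c eta2 lam mu q k \<alpha> a b) (at a))
     \<and> (\<exists>L>0. ((\<lambda>a. dJ c eta2 lam mu q k \<alpha> a b) \<longlongrightarrow> L) (at_right 0))
     \<and> (\<forall>\<^sub>F a in at_top. dJ c eta2 lam mu q k \<alpha> a b < 0)
     \<and> (\<exists>a>0. J c eta2 lam mu q k \<alpha> a b > J c eta2 lam mu q k \<alpha> 0 b)
     \<and> (\<forall>L. ((\<lambda>a. J c eta2 lam mu q k \<alpha> a b) \<longlongrightarrow> L) at_top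
             \<longrightarrow> (\<exists>a>0. J c eta2 lam mu q k \<alpha> a b > L))
     \<and> (\<exists>!a. a > 0 \<and> dJ c eta2 lam mu q k \<alpha> a b = 0)
     \<and> (\<forall>a>0. dJ c eta2 lam mu q k \<alpha> a b = 0 \<longleftrightarrow> Jnum c eta2 lam mu q k \<alpha> a b = 0)
     \<and> (\<forall>a>0. dJ c eta2 lam mu q k \<alpha> a b = 0 \<longrightarrow> J c eta2 lam mu q k \<alpha> a b = k * a)"
proof -
  note as = assms
  define M where "M = (1 + eta2) * lam * mu"
  have Mp: "M > 0" using as by (simp add: M_def)
  have "1 - c / M < \<alpha>" using as(8) by (simp add: alpha_low_def M_def)
  then have "(1 - \<alpha>) * M < c" using Mp by (simp add: field_simps)
  then have crp: "c_ret c eta2 lam mu \<alpha> > 0" by (simp add: c_ret_def M_def mult.assoc)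
  define A where "A = quadA c eta2 lam mu \<alpha>"
  define B where "B = quadB c eta2 lam mu q \<alpha>"
  define s where "s = sqrt (B\<^sup>2 - 4 * A * quadC mu q)"
  have Ap: "A > 0" using crp as by (simp add: A_def quadA_def)
  have "B\<^sup>2 < B\<^sup>2 - 4 * A * quadC mu q" using Ap as by (simp add: quadC_def)
  then have "sqrt (B\<^sup>2) < s" unfolding s_def by (rule real_sqrt_less_mono)
  then have sB: "\<bar>B\<bar> < s" by simp
  define P where "P = Phi_q c eta2 lam mu q \<alpha>"
  define R where "R = rho_m c eta2 lam mu q \<alpha>"
  have P: "P = (- B + s) / (2 * A)" by (simp add: P_def Phi_q_def A_def B_def s_def)
  have R: "R = (- B - s) / (2 * A)" by (simp add: R_def rho_m_def A_def B_def s_def)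
  have Pp: "P > 0" using sB Ap unfolding P by (intro divide_pos_pos) auto
  have Rn: "R < 0" using sB Ap unfolding R by (intro divide_neg_pos) auto
  have den: "P * exp (P * b) - R * exp (R * b) > 0"
  proof -
    have "P * exp (P * b) > 0" "R * exp (R * b) < 0" using Pp Rn by (simp_all add: mult_neg_pos)
    then show ?thesis by linarith
  qed
  have gp: "gam c eta2 lam mu q b \<alpha> > 0"
    unfolding gam_def Let_def P_def[symmetric] R_def[symmetric]
    using den Pp Rn by simp
  have "exp (R * b) \<le> exp (P * b)" using Pp Rn as(7)
    by (simp add: mult_right_mono)
  then have thp: "thet c eta2 lam mu q b \<alpha> \<ge> 0"
    unfolding thet_def Let_def P_def[symmetric] R_def[symmetric]
    using den by simp
  show ?thesis
    by (rule generic[where Jf = "\<lambda>a. J c eta2 lam mu q k \<alpha> a b"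
          and dJf = "\<lambda>a. dJ c eta2 lam mu q k \<alpha> a b" and Nf = "\<lambda>a. Jnum c eta2 lam mu q k \<alpha> a b",
          OF as(3) as(4) as(5) as(6) as(9) crp gp thp])
      (simp_all add: J_def dJ_def Jnum_def m_ret_def)
qed

end
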